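(* Let $X_1$ and $X_2$ be two elliptic ovoids of $Q_0$ which are tangent, and let $x\in X_1\setminus X_2$. Then there exists a unique elliptic ovoid of $Q_0$ containing $x$ which is tangent to both $X_1$ and $X_2$.
   Context: Let $q=2^n$ and let $Q_0\cong Q(4,q)$ be the parabolic quadric generalized quadrangle in $\mathrm{PG}(4,q)$. An elliptic ovoid of $Q_0$ is a set $X=S\cap Q_0$ where $S$ is a $3$-dimensional projective subspace meeting $Q_0$ in an elliptic quadric $Q^-(3,q)$. Two distinct elliptic ovoids meet either in exactly one point (then they are called tangent) or in a non-degenerate conic. *)

theory Defs
  imports "HOL-Analysis.Finite_Cartesian_Product"
begin

text \<open>Vectors of the underlying 5-dimensional vector space V(5,q) of PG(4,q)
  are elements of type 'a ^ 5, for a finite field 'a.\<close>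

definition smul5 :: "'a::field \<Rightarrow> 'a ^ 5 \<Rightarrow> 'a ^ 5" where
  "smul5 c v = (\<chi> i. c * v $ i)"

definition proj_pt :: "'a::field ^ 5 \<Rightarrow> ('a ^ 5) set" where
  "proj_pt v = {smul5 c v | c. c \<noteq> 0}"

text \<open>The parabolic quadric Q_0 = Q(4,q) in canonical form x0^2 + x1 x2 + x3 x4.\<close>
definition Qf :: "'a::field ^ 5 \<Rightarrow> 'a" where
  "Qf v = v $ 0 ^ 2 + v $ 1 * v $ 2 + v $ 3 * v $ 4"

definition Bf :: "'a::field ^ 5 \<Rightarrow> 'a ^ 5 \<Rightarrow> 'a" where
  "Bf u v = Qf (u + v) - Qf u - Qf v"

definition dot5 :: "'a::field ^ 5 \<Rightarrow> 'a ^ 5 \<Rightarrow> 'a" where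
  "dot5 a v = (\<Sum>i\<in>UNIV. a $ i * v $ i)"

definition hyp :: "'a::field ^ 5 \<Rightarrow> ('a ^ 5) set" where
  "hyp a = {v. dot5 a v = 0}"

text \<open>The hyperplane a \<noteq> 0 meets Q_0 in an elliptic quadric Q^-(3,q): the restriction of
  Qf to the hyperplane is a non-degenerate quadric (no singular point) containing no
  line (projective index 0).\<close>
definition elliptic_hyp :: "'a::field ^ 5 \<Rightarrow> bool" where
  "elliptic_hyp a \<longleftrightarrow> a \<noteq> 0
     \<and> (\<forall>v\<in>hyp a. v \<noteq> 0 \<and> Qf v = 0 \<longrightarrow> \<not> (\<forall>w\<in>hyp a. Bf v w = 0))
     \<and> \<not> (\<exists>u v. u \<in> hyp a \<and> v \<in> hyp a \<and> u \<noteq> 0 \<and> (\<forall>c. v \<noteq> smul5 c u)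
              \<and> (\<forall>s t. Qf (smul5 s u + smul5 t v) = 0))"

definition elliptic_ovoid :: "('a::field ^ 5) set set \<Rightarrow> bool" where
  "elliptic_ovoid X \<longleftrightarrow> (\<exists>a. elliptic_hyp a \<and>
      X = {proj_pt v | v. v \<noteq> 0 \<and> v \<in> hyp a \<and> Qf v = 0})"

definition tangent :: "('a ^ 5) set set \<Rightarrow> ('a ^ 5) set set \<Rightarrow> bool" where
  "tangent X Y \<longleftrightarrow> X \<noteq> Y \<and> (\<exists>!p. p \<in> X \<and> p \<in> Y)"

end

theory Submission
  imports Defs
begin


lemma U5: "(UNIV::5 set) = {0,1,2,3,4}"
proof -
  have "card {0,1,2,3,4::5} = 5" by simp
  moreover have "CARD(5) = 5" by simp
  ultimately show ?thesis
    using card_subset_eq[of "UNIV::5 set" "{0,1,2,3,4}"] by simp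
qed

lemma all5: "(\<forall>i::5. P i) \<longleftrightarrow> P 0 \<and> P 1 \<and> P 2 \<and> P 3 \<and> P 4"
proof -
  have "(\<forall>i::5. P i) = (\<forall>i\<in>{0,1,2,3,4}. P i)" by (simp only: U5[symmetric] ball_UNIV)
  also have "\<dots> = (P 0 \<and> P 1 \<and> P 2 \<and> P 3 \<and> P 4)" by simp
  finally show ?thesis .
qed

lemma dot5_exp: "dot5 a v = a$0 * v$0 + a$1 * v$1 + a$2 * v$2 + a$3 * v$3 + a$4 * v$4"
  unfolding dot5_def U5 by (simp add: algebra_simps)

lemma vec5_eq: "(u::'a^5) = v \<longleftrightarrow> u$0 = v$0 \<and> u$1 = v$1 \<and> u$2 = v$2 \<and> u$3 = v$3 \<and> u$4 = v$4"
  by (simp add: vec_eq_iff all5)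

definition mk5 :: "'a \<Rightarrow> 'a \<Rightarrow> 'a \<Rightarrow> 'a \<Rightarrow> 'a \<Rightarrow> 'a^5" where
  "mk5 a b c d e = (\<chi> i. if i = 0 then a else if i = 1 then b else if i = 2 then c else if i = 3 then d else e)"

lemma mk5_comp[simp]: "mk5 a b c d e $ 0 = a" "mk5 a b c d e $ 1 = b" "mk5 a b c d e $ 2 = c"
  "mk5 a b c d e $ 3 = d" "mk5 a b c d e $ 4 = e"
  by (simp_all add: mk5_def)

lemma smul5_comp[simp]: "smul5 c v $ i = c * v $ i"
  by (simp add: smul5_def)

lemma char2:
  assumes "CARD('a::{field,finite}) = 2 ^ n"
  shows "(2::'a) = 0"
proof -
  have inj: "inj (\<lambda>x::'a. x + 1)" by (rule injI) simp
  have surj: "(\<lambda>x::'a. x + 1) ` UNIV = UNIV"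
  proof (rule surjI)
    fix x :: 'a show "(x - 1) + 1 = x" by simp
  qed
  have "sum (\<lambda>x. x) ((\<lambda>x::'a. x + 1) ` UNIV) = sum ((\<lambda>x. x) \<circ> (\<lambda>x::'a. x + 1)) UNIV"
    by (rule sum.reindex[OF inj])
  hence "(\<Sum>x\<in>UNIV. x) = (\<Sum>x\<in>UNIV. x + (1::'a))"
    unfolding surj o_def .
  moreover have "(\<Sum>x\<in>UNIV. x + (1::'a)) = (\<Sum>x\<in>UNIV. x) + (\<Sum>x\<in>(UNIV::'a set). 1)"
    by (rule sum.distrib)
  ultimately have "(\<Sum>x\<in>(UNIV::'a set). 1) = (0::'a)" by simp
  hence "of_nat CARD('a) = (0::'a)" by simp
  hence "(2::'a) ^ n = 0" using assms by simp
  thus ?thesis by simp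
qed

lemma c2_double: "(2::'a::field) = 0 \<Longrightarrow> x + x = (0::'a)"
  by (metis mult_2 mult_zero_left)

lemma c2_neg: "(2::'a::field) = 0 \<Longrightarrow> - x = (x::'a)"
  by (metis add_eq_0_iff c2_double)

lemma c2_diff: "(2::'a::field) = 0 \<Longrightarrow> x - y = x + (y::'a)"
  by (simp add: c2_neg)

lemma c2_sq: "(2::'a::field) = 0 \<Longrightarrow> (x + y)^2 = x^2 + (y::'a)^2"
proof -
  assume c2: "(2::'a) = 0"
  have "(x + y)^2 = x^2 + y^2 + 2 * (x*y)" by algebra
  thus ?thesis using c2 by simp
qed

lemma c2_eq: "(2::'a::field) = 0 \<Longrightarrow> x + y = 0 \<longleftrightarrow> x = (y::'a)"
  by (metis add_eq_0_iff c2_neg)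

lemma sqrt_ex:
  assumes c2: "(2::'a::{field,finite}) = 0"
  shows "\<exists>y. y^2 = (x::'a)"
proof -
  have "inj (\<lambda>y::'a. y^2)"
  proof (rule injI)
    fix y z :: 'a assume "y^2 = z^2"
    hence "(y + z)^2 = 0" using c2 by (simp add: c2_sq c2_double)
    hence "y + z = 0" by simp
    thus "y = z" using c2 by (simp add: c2_eq)
  qed
  hence "surj (\<lambda>y::'a. y^2)" by (rule finite_UNIV_inj_surj[OF finite])
  thus ?thesis by (metis surjD)
qed



definition Bp :: "'a::field^5 \<Rightarrow> 'a^5 \<Rightarrow> 'a" where
  "Bp u v = u$1 * v$2 + u$2 * v$1 + u$3 * v$4 + u$4 * v$3"
definition phi :: "'a::field^5 \<Rightarrow> 'a" where
  "phi v = v$1 * v$2 + v$3 * v$4"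
definition hypB :: "'a::field^5 \<Rightarrow> ('a^5) set" where
  "hypB b = {v. v$0 = Bp b v}"
definition ovl :: "('a::field^5) set \<Rightarrow> ('a^5) set set" where
  "ovl H = {proj_pt v | v. v \<noteq> 0 \<and> v \<in> H \<and> Qf v = 0}"
definition beta :: "'a::field^5 \<Rightarrow> 'a^5" where
  "beta a = mk5 0 (a$2/a$0) (a$1/a$0) (a$4/a$0) (a$3/a$0)"
definition cvec :: "'a::field^5 \<Rightarrow> 'a^5" where
  "cvec e = mk5 1 (e$2) (e$1) (e$4) (e$3)"
definition lift :: "'a::field^5 \<Rightarrow> 'a^5 \<Rightarrow> 'a^5" where
  "lift b u = mk5 (Bp b u) (u$1) (u$2) (u$3) (u$4)"

lemma Qf_exp: "Qf v = (v$0)^2 + phi v"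
  by (simp add: Qf_def phi_def)

lemma Bf_exp: "Bf u v = Bp u v + 2 * (u$0 * v$0)"
  unfolding Bf_def Qf_def Bp_def by (simp add: power2_eq_square algebra_simps)

lemma Bf_Bp: "(2::'a::field) = 0 \<Longrightarrow> Bf u v = Bp u (v::'a^5)"
  by (simp add: Bf_exp)

lemma Bp_sym: "Bp u v = Bp v u"
  by (simp add: Bp_def algebra_simps)

lemma Bp_add1: "Bp (u + v) w = Bp u w + Bp v w"
  by (simp add: Bp_def algebra_simps)
lemma Bp_add2: "Bp w (u + v) = Bp w u + Bp w v"
  by (simp add: Bp_def algebra_simps)
lemma Bp_smul1: "Bp (smul5 c u) w = c * Bp u w"
  by (simp add: Bp_def algebra_simps)
lemma Bp_smul2: "Bp w (smul5 c u) = c * Bp w u"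
  by (simp add: Bp_def algebra_simps)
lemma Bp_zero[simp]: "Bp 0 w = 0" "Bp w 0 = 0"
  by (simp_all add: Bp_def)
lemma Bp_self_ex: "Bp u u = 2 * (u$1 * u$2 + u$3 * u$4)"
  by (simp add: Bp_def algebra_simps)
lemma Bp_self: "(2::'a::field) = 0 \<Longrightarrow> Bp u (u::'a^5) = 0"
  by (simp add: Bp_self_ex)

lemma phi_add: "phi (u + v) = phi u + phi v + Bp u v"
  by (simp add: phi_def Bp_def algebra_simps)
lemma phi_smul: "phi (smul5 c u) = c^2 * phi u"
  by (simp add: phi_def power2_eq_square algebra_simps)

lemma Qf_comb: "Qf (smul5 s u + smul5 t v) = s^2 * Qf u + t^2 * Qf v + s * t * Bf u v"
  unfolding Bf_def Qf_def by (simp add: power2_eq_square algebra_simps)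

lemma smul5_one[simp]: "smul5 1 u = u"
  by (simp add: vec_eq_iff)
lemma smul5_zero[simp]: "smul5 0 u = 0"
  by (simp add: vec_eq_iff)
lemma smul5_eq0: "smul5 c u = 0 \<longleftrightarrow> c = 0 \<or> u = 0"
  by (auto simp: vec_eq_iff)
lemma smul5_smul5: "smul5 c (smul5 d u) = smul5 (c*d) u"
  by (simp add: vec_eq_iff)

lemma Bp_lift1: "Bp (lift b u) v = Bp u v"
  by (simp add: Bp_def lift_def)
lemma Bp_lift2: "Bp v (lift b u) = Bp v u"
  by (simp add: Bp_def lift_def)
lemma lift_hypB: "lift b u \<in> hypB b"
  by (simp add: hypB_def lift_def Bp_lift2[unfolded lift_def])

lemma hypB_smul: "v \<in> hypB b \<Longrightarrow> smul5 c v \<in> hypB b"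
  by (simp add: hypB_def Bp_smul2)
lemma hypB_add: "u \<in> hypB b \<Longrightarrow> v \<in> hypB b \<Longrightarrow> u + v \<in> hypB b"
  by (simp add: hypB_def Bp_add2)
lemma hyp_smul: "v \<in> hyp a \<Longrightarrow> smul5 c v \<in> hyp a"
  by (simp add: hyp_def dot5_exp algebra_simps) (metis mult_zero_right distrib_left)

lemma hypB_eq:
  assumes "e$1 = e'$1" "e$2 = e'$2" "e$3 = e'$3" "e$4 = e'$4"
  shows "hypB e = hypB e'"
  using assms by (simp add: hypB_def Bp_def)

lemma proj_self: "v \<in> proj_pt v"
  unfolding proj_pt_def by (rule CollectI, rule exI[of _ 1]) simp

lemma proj_eq:
  assumes "proj_pt u = proj_pt v"
  shows "\<exists>c. c \<noteq> 0 \<and> u = smul5 c v"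
  using proj_self[of u] assms unfolding proj_pt_def by auto

lemma proj_smul:
  assumes "c \<noteq> 0"
  shows "proj_pt (smul5 c v) = proj_pt v"
  unfolding proj_pt_def
proof (intro set_eqI iffI)
  fix w assume "w \<in> {smul5 d (smul5 c v) |d. d \<noteq> 0}"
  then obtain d where "d \<noteq> 0" "w = smul5 d (smul5 c v)" by auto
  thus "w \<in> {smul5 d v |d. d \<noteq> 0}" using assms by (auto simp: smul5_smul5)
next
  fix w assume "w \<in> {smul5 d v |d. d \<noteq> 0}"
  then obtain d where "d \<noteq> 0" "w = smul5 d v" by auto
  hence "w = smul5 (d / c) (smul5 c v)" using assms by (simp add: smul5_smul5)
  thus "w \<in> {smul5 d (smul5 c v) |d. d \<noteq> 0}" using \<open>d \<noteq> 0\<close> assms by auto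
qed

lemma Qf_smul: "Qf (smul5 c v) = c^2 * Qf v"
  unfolding Qf_def by (simp add: power2_eq_square algebra_simps)

lemma ovl_mem:
  assumes cl: "\<And>c v. v \<in> H \<Longrightarrow> smul5 c v \<in> H" and nz: "w \<noteq> 0"
  shows "proj_pt w \<in> ovl H \<longleftrightarrow> w \<in> H \<and> Qf w = 0"
proof
  assume "proj_pt w \<in> ovl H"
  then obtain v where v: "proj_pt w = proj_pt v" "v \<noteq> 0" "v \<in> H" "Qf v = 0"
    unfolding ovl_def by auto
  then obtain c where "w = smul5 c v" using proj_eq by blast
  thus "w \<in> H \<and> Qf w = 0" using v cl by (simp add: Qf_smul)
next
  assume "w \<in> H \<and> Qf w = 0"
  thus "proj_pt w \<in> ovl H" using nz unfolding ovl_def by auto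
qed

lemma ovl_elem:
  assumes "p \<in> ovl H"
  obtains v where "p = proj_pt v" "v \<noteq> 0" "v \<in> H" "Qf v = 0"
  using assms unfolding ovl_def by auto

lemma lemA:
  assumes e: "elliptic_hyp a" and z: "z \<in> hyp a" and y: "y \<in> hyp a" and nz: "z \<noteq> 0"
    and Qz: "Qf z = 0" and Qy: "Qf y = 0" and B: "Bf z y = 0"
  shows "\<exists>c. y = smul5 c z"
proof (rule ccontr)
  assume nc: "\<not> (\<exists>c. y = smul5 c z)"
  have "\<forall>s t. Qf (smul5 s z + smul5 t y) = 0"
    using Qz Qy B by (simp add: Qf_comb)
  hence "\<exists>u v. u \<in> hyp a \<and> v \<in> hyp a \<and> u \<noteq> 0 \<and> (\<forall>c. v \<noteq> smul5 c u)
              \<and> (\<forall>s t. Qf (smul5 s u + smul5 t v) = 0)"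
    using z y nz nc by blast
  thus False using e unfolding elliptic_hyp_def by blast
qed

lemma a0nz:
  assumes c2: "(2::'a::{field,finite}) = 0" and e: "elliptic_hyp (a::'a^5)"
  shows "a$0 \<noteq> 0"
proof
  assume a0: "a$0 = 0"
  obtain y where y: "y^2 = a$2 * a$1 + a$4 * a$3" using sqrt_ex[OF c2] by blast
  define v where "v = mk5 y (a$2) (a$1) (a$4) (a$3)"
  have anz: "a \<noteq> 0" using e unfolding elliptic_hyp_def by blast
  have vnz: "v \<noteq> 0"
  proof
    assume "v = 0"
    hence "a$1 = 0 \<and> a$2 = 0 \<and> a$3 = 0 \<and> a$4 = 0" unfolding v_def vec5_eq by simp
    hence "a = 0" using a0 by (simp add: vec5_eq)
    thus False using anz by simp
  qed
  have vh: "v \<in> hyp a"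
  proof -
    have "dot5 a v = a$0 * y + 2 * (a$1 * a$2 + a$3 * a$4)"
      unfolding dot5_exp v_def by (simp add: algebra_simps)
    thus ?thesis using a0 c2 by (simp add: hyp_def)
  qed
  have Qv: "Qf v = 0"
  proof -
    have "Qf v = y^2 + (a$2 * a$1 + a$4 * a$3)" unfolding Qf_def v_def by simp
    also have "\<dots> = 2 * (a$2 * a$1 + a$4 * a$3)" using y by simp
    finally show ?thesis using c2 by simp
  qed
  have "\<forall>w\<in>hyp a. Bf v w = 0"
  proof
    fix w assume "w \<in> hyp a"
    hence "dot5 a w = 0" by (simp add: hyp_def)
    hence "a$1 * w$1 + a$2 * w$2 + a$3 * w$3 + a$4 * w$4 = 0" using a0 by (simp add: dot5_exp)
    thus "Bf v w = 0" using c2 by (simp add: Bf_Bp Bp_def v_def algebra_simps)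
  qed
  thus False using e vh vnz Qv unfolding elliptic_hyp_def by blast
qed

lemma hyp_beta:
  assumes c2: "(2::'a::field) = 0" and a0: "(a::'a^5)$0 \<noteq> 0"
  shows "hyp a = hypB (beta a)"
proof (rule set_eqI)
  fix v :: "'a^5"
  let ?S = "a$1 * v$1 + a$2 * v$2 + a$3 * v$3 + a$4 * v$4"
  have B: "Bp (beta a) v = ?S / a$0"
    unfolding Bp_def beta_def using a0 by (simp add: field_simps)
  have "v \<in> hyp a \<longleftrightarrow> a$0 * v$0 + ?S = 0" by (simp add: hyp_def dot5_exp algebra_simps)
  also have "\<dots> \<longleftrightarrow> a$0 * v$0 = ?S" using c2 by (rule c2_eq)
  also have "\<dots> \<longleftrightarrow> v$0 = ?S / a$0" using a0 by (auto simp: field_simps)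
  finally show "v \<in> hyp a \<longleftrightarrow> v \<in> hypB (beta a)" using B by (simp add: hypB_def)
qed

lemma hyp_cvec:
  assumes c2: "(2::'a::field) = 0"
  shows "hyp (cvec e) = hypB (e::'a^5)"
proof (rule set_eqI)
  fix v :: "'a^5"
  have "v \<in> hyp (cvec e) \<longleftrightarrow> v$0 + Bp e v = 0"
    by (simp add: hyp_def dot5_exp cvec_def Bp_def algebra_simps)
  also have "\<dots> \<longleftrightarrow> v$0 = Bp e v" using c2 by (rule c2_eq)
  finally show "v \<in> hyp (cvec e) \<longleftrightarrow> v \<in> hypB e" by (simp add: hypB_def)
qed



lemma minor:
  fixes d r :: "'a::field^5"
  assumes H: "\<And>R. Bp d R = 0 \<Longrightarrow> Bp r R = 0"
    and nz: "d$1 \<noteq> 0 \<or> d$2 \<noteq> 0 \<or> d$3 \<noteq> 0 \<or> d$4 \<noteq> 0"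
  shows "\<exists>k. r$1 = k * d$1 \<and> r$2 = k * d$2 \<and> r$3 = k * d$3 \<and> r$4 = k * d$4"
proof -
  have m12: "r$1 * d$2 = r$2 * d$1"
    using H[of "mk5 0 (-(d$1)) (d$2) 0 0"] by (simp add: Bp_def algebra_simps)
  have m13: "r$1 * d$3 = r$3 * d$1"
    using H[of "mk5 0 0 (d$3) 0 (-(d$1))"] by (simp add: Bp_def algebra_simps)
  have m14: "r$1 * d$4 = r$4 * d$1"
    using H[of "mk5 0 0 (d$4) (-(d$1)) 0"] by (simp add: Bp_def algebra_simps)
  have m23: "r$2 * d$3 = r$3 * d$2"
    using H[of "mk5 0 (d$3) 0 0 (-(d$2))"] by (simp add: Bp_def algebra_simps)
  have m24: "r$2 * d$4 = r$4 * d$2"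
    using H[of "mk5 0 (d$4) 0 (-(d$2)) 0"] by (simp add: Bp_def algebra_simps)
  have m34: "r$3 * d$4 = r$4 * d$3"
    using H[of "mk5 0 0 0 (-(d$3)) (d$4)"] by (simp add: Bp_def algebra_simps)
  from nz show ?thesis
  proof (elim disjE)
    assume d: "d$1 \<noteq> 0"
    show ?thesis
      by (rule exI[of _ "r$1 / d$1"]) (use d m12 m13 m14 in \<open>simp add: field_simps\<close>)
  next
    assume d: "d$2 \<noteq> 0"
    show ?thesis
      by (rule exI[of _ "r$2 / d$2"]) (use d m12 m23 m24 in \<open>simp add: field_simps\<close>)
  next
    assume d: "d$3 \<noteq> 0"
    show ?thesis
      by (rule exI[of _ "r$3 / d$3"]) (use d m13 m23 m34 in \<open>simp add: field_simps\<close>)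
  next
    assume d: "d$4 \<noteq> 0"
    show ?thesis
      by (rule exI[of _ "r$4 / d$4"]) (use d m14 m24 m34 in \<open>simp add: field_simps\<close>)
  qed
qed

lemma lemT:
  fixes al ga r :: "'a::field^5"
  assumes c2: "(2::'a) = 0" and neq: "hypB al \<noteq> hypB ga" and rnz: "r \<noteq> 0"
    and ra: "r \<in> hypB al" and rg: "r \<in> hypB ga" and Qr: "Qf r = 0"
    and uniq: "\<And>w. w \<noteq> 0 \<Longrightarrow> w \<in> hypB al \<Longrightarrow> w \<in> hypB ga \<Longrightarrow> Qf w = 0 \<Longrightarrow> \<exists>k. w = smul5 k r"
  shows "\<exists>k. r$1 = k * (al$1 + ga$1) \<and> r$2 = k * (al$2 + ga$2) \<and> r$3 = k * (al$3 + ga$3) \<and> r$4 = k * (al$4 + ga$4)"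
proof -
  have rr: "Bp r r = 0" using c2 by (rule Bp_self)
  have perp: "Bp r R = 0" if Ra: "R \<in> hypB al" and Rg: "R \<in> hypB ga" for R
  proof (rule ccontr)
    assume nb: "Bp r R \<noteq> 0"
    show False
    proof (cases "Qf R = 0")
      case True
      have "R \<noteq> 0" using nb by auto
      then obtain k where "R = smul5 k r" using uniq Ra Rg True by blast
      hence "Bp r R = 0" by (simp add: Bp_smul2 rr)
      thus False using nb by simp
    next
      case False
      define t where "t = Bp r R / Qf R"
      define w where "w = r + smul5 t R"
      have tnz: "t \<noteq> 0" using nb False by (simp add: t_def)
      have tq: "t * Qf R = Bp r R" using False by (simp add: t_def)
      have wa: "w \<in> hypB al" unfolding w_def by (rule hypB_add[OF ra hypB_smul[OF Ra]])
      have wg: "w \<in> hypB ga" unfolding w_def by (rule hypB_add[OF rg hypB_smul[OF Rg]])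
      have "Qf w = Qf (smul5 1 r + smul5 t R)" by (simp add: w_def)
      also have "\<dots> = t^2 * Qf R + t * Bp r R" using Qr Qf_comb[of 1 r t R] by (simp add: Bf_Bp[OF c2])
      also have "\<dots> = t * Bp r R + t * Bp r R"
        using tq by (simp add: power2_eq_square mult.assoc)
      also have "\<dots> = 0" using c2 by (rule c2_double)
      finally have Qw: "Qf w = 0" .
      have Bw: "Bp r w = t * Bp r R" by (simp add: w_def Bp_add2 Bp_smul2 rr)
      hence "w \<noteq> 0" using tnz nb by auto
      then obtain k where "w = smul5 k r" using uniq wa wg Qw by blast
      hence "Bp r w = 0" by (simp add: Bp_smul2 rr)
      thus False using Bw tnz nb by simp
    qed
  qed
  have all: "Bp r R = 0" if "Bp (al + ga) R = 0" for R
  proof -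
    have e: "Bp al R = Bp ga R" using that c2 by (simp add: Bp_add1 c2_eq)
    have "lift al R \<in> hypB al" by (rule lift_hypB)
    moreover have "lift al R \<in> hypB ga" using e by (simp add: hypB_def lift_def Bp_lift2[unfolded lift_def])
    ultimately have "Bp r (lift al R) = 0" by (rule perp)
    thus ?thesis by (simp add: Bp_lift2)
  qed
  have nz: "(al+ga)$1 \<noteq> 0 \<or> (al+ga)$2 \<noteq> 0 \<or> (al+ga)$3 \<noteq> 0 \<or> (al+ga)$4 \<noteq> 0"
  proof (rule ccontr)
    assume "\<not> ?thesis"
    hence "al$1 = ga$1 \<and> al$2 = ga$2 \<and> al$3 = ga$3 \<and> al$4 = ga$4" using c2 by (simp add: c2_eq)
    hence "hypB al = hypB ga" by (intro hypB_eq) auto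
    thus False using neq by simp
  qed
  from minor[OF all nz] show ?thesis by simp
qed

lemma QW:
  fixes be ga xv :: "'a::field^5"
  assumes c2: "(2::'a) = 0" and Qd: "(Bp ga (be+ga))^2 + phi (be+ga) = 0"
    and Xf: "(Bp be xv)^2 + phi xv = 0"
  shows "(Bp ga (be + ga + smul5 m xv))^2 + phi (be + ga + smul5 m xv)
         = (m * (Bp be xv + Bp ga xv))^2 + m * (Bp be xv + Bp ga xv)"
proof -
  define A where "A = Bp ga (be+ga)"
  define P where "P = phi (be+ga)"
  define G where "G = Bp ga xv"
  define T where "T = Bp be xv"
  define F where "F = phi xv"
  have e1: "Bp ga (be + ga + smul5 m xv) = A + m * G"
    unfolding A_def G_def by (simp add: Bp_add2 Bp_smul2)
  have e2: "phi (be + ga + smul5 m xv) = P + m^2 * F + m * (T + G)"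
    unfolding P_def F_def T_def G_def by (simp add: phi_add phi_smul Bp_add1 Bp_add2 Bp_smul2 algebra_simps)
  have id: "(A + m*G)^2 + (P + m^2*F + m*(T+G)) = (A^2 + P) + m^2*(T^2+F) + (m*(T+G))^2 + m*(T+G)
             + 2*(m*A*G - m^2*T^2 - m^2*T*G)" by algebra
  have "A^2 + P = 0" using Qd by (simp add: A_def P_def)
  moreover have "T^2 + F = 0" using Xf by (simp add: T_def F_def)
  ultimately have "(A + m*G)^2 + (P + m^2*F + m*(T+G)) = (m*(T+G))^2 + m*(T+G)"
    using id c2 by simp
  thus ?thesis using e1 e2 by (simp add: T_def G_def)
qed

lemma ell_new:
  fixes be xv ep :: "'a::field^5"
  assumes c2: "(2::'a) = 0" and e1: "elliptic_hyp a1" and H1: "hyp a1 = hypB be"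
    and xnz: "xv \<noteq> 0" and xb: "xv \<in> hypB be" and Qx: "Qf xv = 0" and snz: "s \<noteq> 0"
    and eps: "ep = be + smul5 (1/s) xv"
  shows "elliptic_hyp (cvec ep)"
proof -
  have Be: "Bp ep w = Bp be w + Bp xv w / s" for w by (simp add: eps Bp_add1 Bp_smul1)
  have toB: "w \<in> hypB be" if "w \<in> hypB ep" "Bp xv w = 0" for w using that Be by (simp add: hypB_def)
  have xa: "xv \<in> hyp a1" using xb H1 by simp
  have N: "Bp xv y = 0" if z: "z \<in> hypB ep" "z \<noteq> 0" "Qf z = 0" "Bp xv z = 0" "Bp z y = 0" for z y
  proof -
    have zb: "z \<in> hyp a1" using toB[OF z(1) z(4)] H1 by simp
    have "Bf xv z = 0" using z(4) c2 by (simp add: Bf_Bp)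
    then obtain k where k: "z = smul5 k xv" using lemA[OF e1 xa zb xnz Qx z(3)] by auto
    have "k \<noteq> 0" using z(2) k by auto
    moreover have "Bp z y = k * Bp xv y" using k by (simp add: Bp_smul1)
    ultimately show ?thesis using z(5) by simp
  qed
  show ?thesis unfolding elliptic_hyp_def hyp_cvec[OF c2]
  proof (intro conjI)
    show "cvec ep \<noteq> 0" by (simp add: cvec_def vec5_eq)
    show "\<forall>v\<in>hypB ep. v \<noteq> 0 \<and> Qf v = 0 \<longrightarrow> \<not> (\<forall>w\<in>hypB ep. Bf v w = 0)"
    proof (intro ballI impI)
      fix v assume v: "v \<in> hypB ep" "v \<noteq> 0 \<and> Qf v = 0"
      have "\<exists>u. Bp v u \<noteq> 0"
      proof (rule ccontr)
        assume "\<not> ?thesis"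
        hence a: "\<And>u. Bp v u = 0" by blast
        have "v$1 = 0" using a[of "mk5 0 0 1 0 0"] by (simp add: Bp_def)
        moreover have "v$2 = 0" using a[of "mk5 0 1 0 0 0"] by (simp add: Bp_def)
        moreover have "v$3 = 0" using a[of "mk5 0 0 0 0 1"] by (simp add: Bp_def)
        moreover have "v$4 = 0" using a[of "mk5 0 0 0 1 0"] by (simp add: Bp_def)
        ultimately have "v$0 = 0" using v(1) by (simp add: hypB_def Bp_def)
        hence "v = 0" using \<open>v$1 = 0\<close> \<open>v$2 = 0\<close> \<open>v$3 = 0\<close> \<open>v$4 = 0\<close> by (simp add: vec5_eq)
        thus False using v(2) by simp
      qed
      then obtain u where "Bp v u \<noteq> 0" by blast
      hence "Bf v (lift ep u) \<noteq> 0" using c2 by (simp add: Bf_Bp Bp_lift2)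
      thus "\<not> (\<forall>w\<in>hypB ep. Bf v w = 0)" using lift_hypB by blast
    qed
    show "\<not> (\<exists>u v. u \<in> hypB ep \<and> v \<in> hypB ep \<and> u \<noteq> 0 \<and> (\<forall>c. v \<noteq> smul5 c u)
              \<and> (\<forall>s t. Qf (smul5 s u + smul5 t v) = 0))"
    proof
      assume "\<exists>u v. u \<in> hypB ep \<and> v \<in> hypB ep \<and> u \<noteq> 0 \<and> (\<forall>c. v \<noteq> smul5 c u)
              \<and> (\<forall>s t. Qf (smul5 s u + smul5 t v) = 0)"
      then obtain u v where u: "u \<in> hypB ep" and v: "v \<in> hypB ep" and unz: "u \<noteq> 0"
        and nc: "\<forall>c. v \<noteq> smul5 c u" and L: "\<forall>s t. Qf (smul5 s u + smul5 t v) = 0" by blast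
      have Qu: "Qf u = 0" using L[rule_format, of 1 0] by simp
      have Qv: "Qf v = 0" using L[rule_format, of 0 1] by simp
      have Buv: "Bp u v = 0" using L[rule_format, of 1 1] Qf_comb[of 1 u 1 v] Qu Qv c2 by (simp add: Bf_Bp)
      show False
      proof (cases "Bp xv u = 0")
        case gu: True
        show False
        proof (cases "Bp xv v = 0")
          case gv: True
          have ub: "u \<in> hyp a1" using toB[OF u gu] H1 by simp
          have vb: "v \<in> hyp a1" using toB[OF v gv] H1 by simp
          obtain k where k: "u = smul5 k xv" using lemA[OF e1 xa ub xnz Qx Qu] gu c2 by (auto simp: Bf_Bp)
          obtain k' where k': "v = smul5 k' xv" using lemA[OF e1 xa vb xnz Qx Qv] gv c2 by (auto simp: Bf_Bp)
          have "k \<noteq> 0" using unz k by auto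
          hence "v = smul5 (k'/k) u" using k k' by (simp add: smul5_smul5)
          thus False using nc by blast
        next
          case False
          thus False using N[OF u unz Qu gu Buv] by simp
        qed
      next
        case gu: False
        define z where "z = smul5 (Bp xv v) u + smul5 (-(Bp xv u)) v"
        have zh: "z \<in> hypB ep" unfolding z_def by (intro hypB_add hypB_smul u v)
        have Qz: "Qf z = 0" using L unfolding z_def by blast
        have gz: "Bp xv z = 0" unfolding z_def by (simp add: Bp_add2 Bp_smul2)
        have Bzu: "Bp z u = 0" unfolding z_def using Buv c2
          by (simp add: Bp_add1 Bp_smul1 Bp_self Bp_sym[of v u])
        have znz: "z \<noteq> 0"
        proof
          assume "z = 0"
          hence "\<forall>i. Bp xv v * u$i + - (Bp xv u * v$i) = 0" unfolding z_def vec_eq_iff by simp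
          hence "v = smul5 (Bp xv v / Bp xv u) u" using gu by (simp add: vec_eq_iff field_simps)
          thus False using nc by blast
        qed
        have "Bp xv u = 0" by (rule N[OF zh znz Qz gz Bzu])
        thus False using gu by simp
      qed
    qed
  qed
qed



lemma scale14:
  assumes "r$1 = k*d$1" "r$2 = k*d$2" "r$3 = k*d$3" "r$4 = k*d$4"
  shows "Bp g r = k * Bp g d" "phi r = k^2 * phi d"
  using assms by (simp_all add: Bp_def phi_def power2_eq_square algebra_simps)

lemma solve_c2:
  assumes c2: "(2::'a::field) = 0" and k: "k \<noteq> 0" and x: "x = k * (b + e)"
  shows "e = b + x / (k::'a)"
proof -
  have "x / k = b + e" using k x by simp
  hence "e = x / k - b" by simp
  thus ?thesis using c2 by (simp add: c2_diff add.commute)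
qed

lemma coords_nz:
  assumes "v \<in> hypB b" "v \<noteq> 0"
  shows "v$1 \<noteq> 0 \<or> v$2 \<noteq> 0 \<or> v$3 \<noteq> 0 \<or> v$4 \<noteq> 0"
  using assms by (auto simp: hypB_def Bp_def vec5_eq)

theorem mainTheorem4:
  fixes X1 X2 :: "('a::{field,finite} ^ 5) set set" and x :: "('a ^ 5) set" and n :: nat
  assumes "CARD('a) = 2 ^ n"
    and "elliptic_ovoid X1" and "elliptic_ovoid X2" and "tangent X1 X2"
    and "x \<in> X1" and "x \<notin> X2"
  shows "\<exists>!X. elliptic_ovoid X \<and> x \<in> X \<and> tangent X X1 \<and> tangent X X2"
proof -
  have c2: "(2::'a) = 0" using assms(1) by (rule char2)
  have ovm: "\<And>b w. w \<noteq> 0 \<Longrightarrow> proj_pt w \<in> ovl (hypB b) \<longleftrightarrow> w \<in> hypB b \<and> Qf w = 0"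
    by (rule ovl_mem) (auto intro: hypB_smul)
  have evl: "\<And>Y. elliptic_ovoid Y \<longleftrightarrow> (\<exists>a. elliptic_hyp a \<and> Y = ovl (hyp a))"
    unfolding elliptic_ovoid_def ovl_def by simp
  obtain a1 where e1: "elliptic_hyp a1" and X1a: "X1 = ovl (hyp a1)" using assms(2) evl by blast
  obtain a2 where e2: "elliptic_hyp a2" and X2a: "X2 = ovl (hyp a2)" using assms(3) evl by blast
  define be where "be = beta a1"
  define ga where "ga = beta a2"
  have H1: "hyp a1 = hypB be" unfolding be_def by (rule hyp_beta[OF c2 a0nz[OF c2 e1]])
  have H2: "hyp a2 = hypB ga" unfolding ga_def by (rule hyp_beta[OF c2 a0nz[OF c2 e2]])
  have X1: "X1 = ovl (hypB be)" using X1a H1 by simp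
  have X2: "X2 = ovl (hypB ga)" using X2a H2 by simp
  obtain xv where xv: "x = proj_pt xv" "xv \<noteq> 0" "xv \<in> hypB be" "Qf xv = 0"
    using assms(5) X1 by (auto elim: ovl_elem)
  have xa1: "xv \<in> hyp a1" using xv(3) H1 by simp
  have xng: "xv \<notin> hypB ga" using assms(6) X2 ovm[OF xv(2)] xv by auto
  define s where "s = Bp be xv + Bp ga xv"
  have snz: "s \<noteq> 0"
  proof
    assume "s = 0"
    hence "Bp be xv = Bp ga xv" using c2 by (simp add: s_def c2_eq)
    hence "xv \<in> hypB ga" using xv(3) by (simp add: hypB_def)
    thus False using xng by simp
  qed
  have Xf: "(Bp be xv)^2 + phi xv = 0" using xv(3,4) by (simp add: Qf_exp hypB_def)
  have neq12: "hypB ga \<noteq> hypB be" using assms(4) X1 X2 unfolding tangent_def by auto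
  obtain p where p: "p \<in> X1" "p \<in> X2" and pu: "\<And>q. q \<in> X1 \<Longrightarrow> q \<in> X2 \<Longrightarrow> q = p"
    using assms(4) unfolding tangent_def by auto
  obtain pv where pv: "p = proj_pt pv" "pv \<noteq> 0" "pv \<in> hypB be" "Qf pv = 0"
    using p(1) X1 by (auto elim: ovl_elem)
  have pvg: "pv \<in> hypB ga" using p(2) X2 ovm[OF pv(2)] pv(1) by simp
  have uniqp: "\<exists>k. w = smul5 k pv" if "w \<noteq> 0" "w \<in> hypB ga" "w \<in> hypB be" "Qf w = 0" for w
  proof -
    have "proj_pt w \<in> X1" "proj_pt w \<in> X2" using that X1 X2 ovm by auto
    hence "proj_pt w = proj_pt pv" using pu pv(1) by simp
    thus ?thesis using proj_eq by blast
  qed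
  obtain sg where sg: "pv$1 = sg * (ga$1 + be$1)" "pv$2 = sg * (ga$2 + be$2)"
    "pv$3 = sg * (ga$3 + be$3)" "pv$4 = sg * (ga$4 + be$4)"
    using lemT[OF c2 neq12 pv(2) pvg pv(3) pv(4) uniqp] by blast
  have sgnz: "sg \<noteq> 0" using coords_nz[OF pv(3) pv(2)] sg by auto
  have Qd: "(Bp ga (be+ga))^2 + phi (be+ga) = 0"
  proof -
    have sc: "Bp ga pv = sg * Bp ga (ga + be)" "phi pv = sg^2 * phi (ga + be)"
      using scale14[of pv sg "ga + be"] sg by simp_all
    have "0 = (Bp ga pv)^2 + phi pv" using pv(4) pvg by (simp add: Qf_exp hypB_def)
    also have "\<dots> = sg^2 * ((Bp ga (ga + be))^2 + phi (ga + be))"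
      using sc by (simp add: power_mult_distrib algebra_simps)
    finally show ?thesis using sgnz by (simp add: add.commute)
  qed
  define ep where "ep = be + smul5 (1/s) xv"
  define X where "X = ovl (hypB ep)"
  have He: "hyp (cvec ep) = hypB ep" by (rule hyp_cvec[OF c2])
  have ell: "elliptic_hyp (cvec ep)" by (rule ell_new[OF c2 e1 H1 xv(2) xv(3) xv(4) snz ep_def])
  have eX: "elliptic_ovoid X" unfolding evl X_def using ell He by metis
  have Be: "Bp ep w = Bp be w + Bp xv w / s" for w by (simp add: ep_def Bp_add1 Bp_smul1)
  have xe: "xv \<in> hypB ep" using xv(3) Be[of xv] Bp_self[OF c2, of xv] by (simp add: hypB_def)
  have xX: "x \<in> X" unfolding X_def using ovm[OF xv(2)] xe xv by simp
  have c1: "proj_pt w = x" if w: "w \<noteq> 0" "w \<in> hypB ep" "w \<in> hypB be" "Qf w = 0" for w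
  proof -
    have "Bp xv w / s = 0" using w(2,3) Be[of w] by (simp add: hypB_def)
    hence "Bp xv w = 0" using snz by simp
    hence "Bf xv w = 0" using c2 by (simp add: Bf_Bp)
    moreover have "w \<in> hyp a1" using w(3) H1 by simp
    ultimately obtain k where k: "w = smul5 k xv" using lemA[OF e1 xa1 _ xv(2) xv(4) w(4)] by blast
    hence "k \<noteq> 0" using w(1) by auto
    thus ?thesis using k xv(1) by (simp add: proj_smul)
  qed
  have t1: "tangent X X1"
    unfolding tangent_def
  proof (intro conjI)
    show "X \<noteq> X1"
    proof
      assume "X = X1"
      hence "p \<in> X" using p(1) by simp
      hence "pv \<in> hypB ep" using ovm[OF pv(2)] pv(1) X_def by simp
      hence "p = x" using c1[OF pv(2) _ pv(3) pv(4)] pv(1) by simp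
      thus False using p(2) assms(6) by simp
    qed
    show "\<exists>!q. q \<in> X \<and> q \<in> X1"
    proof (rule ex1I[of _ x])
      show "x \<in> X \<and> x \<in> X1" using xX assms(5) by simp
      fix q assume q: "q \<in> X \<and> q \<in> X1"
      then obtain qv where qv: "q = proj_pt qv" "qv \<noteq> 0" "qv \<in> hypB ep" "Qf qv = 0"
        unfolding X_def by (auto elim: ovl_elem)
      have "qv \<in> hypB be" using q X1 ovm[OF qv(2)] qv(1) by simp
      thus "q = x" using c1[OF qv(2) qv(3) _ qv(4)] qv(1) by simp
    qed
  qed
  define w0 where "w0 = be + ga + smul5 (1/s) xv"
  define rv where "rv = lift ga w0"
  have epw: "Bp ep u = Bp w0 u + Bp ga u" for u
  proof -
    have "Bp w0 u + Bp ga u = Bp ep u + (Bp ga u + Bp ga u)"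
      by (simp add: w0_def ep_def Bp_add1 Bp_smul1 algebra_simps)
    thus ?thesis using c2_double[OF c2] by simp
  qed
  have rvg: "rv \<in> hypB ga" unfolding rv_def by (rule lift_hypB)
  have rve: "rv \<in> hypB ep"
  proof -
    have "Bp ep rv = Bp w0 w0 + Bp ga w0" using epw[of rv] by (simp add: rv_def Bp_lift2)
    also have "\<dots> = rv$0" using Bp_self[OF c2, of w0] by (simp add: rv_def lift_def)
    finally show ?thesis by (simp add: hypB_def)
  qed
  have Qrv: "Qf rv = 0"
  proof -
    have "Qf rv = (Bp ga w0)^2 + phi w0" by (simp add: Qf_exp rv_def lift_def phi_def)
    also have "\<dots> = (1/s * s)^2 + 1/s * s" unfolding w0_def s_def by (rule QW[OF c2 Qd Xf])
    also have "\<dots> = 0" using snz c2 by simp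
    finally show ?thesis .
  qed
  have rvnz: "rv \<noteq> 0"
  proof -
    have "Bp (be + ga) rv = Bp (be+ga) (be+ga) + 1/s * s"
      by (simp add: rv_def Bp_lift2 w0_def Bp_add2 Bp_smul2 s_def Bp_add1)
    also have "\<dots> = 1" using snz Bp_self[OF c2, of "be+ga"] by simp
    finally show ?thesis by auto
  qed
  have rva2: "rv \<in> hyp a2" using rvg H2 by simp
  have c2p: "proj_pt w = proj_pt rv" if w: "w \<noteq> 0" "w \<in> hypB ep" "w \<in> hypB ga" "Qf w = 0" for w
  proof -
    have "Bp rv w = Bp w0 w" by (simp add: rv_def Bp_lift1)
    also have "\<dots> = Bp ep w + Bp ga w" using epw[of w] c2 by (simp add: add.assoc c2_double)
    also have "\<dots> = 0" using w(2,3) c2 by (simp add: hypB_def c2_double)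
    finally have "Bf rv w = 0" using c2 by (simp add: Bf_Bp)
    moreover have "w \<in> hyp a2" using w(3) H2 by simp
    ultimately obtain k where k: "w = smul5 k rv" using lemA[OF e2 rva2 _ rvnz Qrv w(4)] by blast
    hence "k \<noteq> 0" using w(1) by auto
    thus ?thesis using k by (simp add: proj_smul)
  qed
  have t2: "tangent X X2"
    unfolding tangent_def
  proof (intro conjI)
    show "X \<noteq> X2" using xX assms(6) by auto
    show "\<exists>!q. q \<in> X \<and> q \<in> X2"
    proof (rule ex1I[of _ "proj_pt rv"])
      show "proj_pt rv \<in> X \<and> proj_pt rv \<in> X2"
        using ovm[OF rvnz] rve rvg Qrv X_def X2 by simp
      fix q assume q: "q \<in> X \<and> q \<in> X2"
      then obtain qv where qv: "q = proj_pt qv" "qv \<noteq> 0" "qv \<in> hypB ep" "Qf qv = 0"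
        unfolding X_def by (auto elim: ovl_elem)
      have "qv \<in> hypB ga" using q X2 ovm[OF qv(2)] qv(1) by simp
      thus "q = proj_pt rv" using c2p[OF qv(2) qv(3) _ qv(4)] qv(1) by simp
    qed
  qed
  have uq: "Y = X" if Y: "elliptic_ovoid Y" "x \<in> Y" "tangent Y X1" "tangent Y X2" for Y
  proof -
    obtain c where ec: "elliptic_hyp c" and Yc: "Y = ovl (hyp c)" using Y(1) evl by blast
    define ep' where "ep' = beta c"
    have Hc: "hyp c = hypB ep'" unfolding ep'_def by (rule hyp_beta[OF c2 a0nz[OF c2 ec]])
    have Yb: "Y = ovl (hypB ep')" using Yc Hc by simp
    have xe': "xv \<in> hypB ep'" using Y(2) Yb ovm[OF xv(2)] xv(1) by simp
    have neq1: "hypB be \<noteq> hypB ep'" using Y(3) X1 Yb unfolding tangent_def by auto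
    obtain q1 where q1u: "\<And>q. q \<in> Y \<Longrightarrow> q \<in> X1 \<Longrightarrow> q = q1"
      using Y(3) unfolding tangent_def by auto
    have uniq1: "\<exists>k. w = smul5 k xv" if "w \<noteq> 0" "w \<in> hypB be" "w \<in> hypB ep'" "Qf w = 0" for w
    proof -
      have "proj_pt w \<in> Y" "proj_pt w \<in> X1" using that X1 Yb ovm by auto
      hence "proj_pt w = proj_pt xv" using q1u[of "proj_pt w"] q1u[of x] Y(2) assms(5) xv(1) by simp
      thus ?thesis using proj_eq by blast
    qed
    obtain ka where ka: "xv$1 = ka * (be$1 + ep'$1)" "xv$2 = ka * (be$2 + ep'$2)"
      "xv$3 = ka * (be$3 + ep'$3)" "xv$4 = ka * (be$4 + ep'$4)"
      using lemT[OF c2 neq1 xv(2) xv(3) xe' xv(4) uniq1] by blast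
    have kanz: "ka \<noteq> 0" using coords_nz[OF xv(3) xv(2)] ka by auto
    define mu where "mu = 1 / ka"
    have ep'c: "ep'$1 = be$1 + mu * xv$1" "ep'$2 = be$2 + mu * xv$2"
      "ep'$3 = be$3 + mu * xv$3" "ep'$4 = be$4 + mu * xv$4"
      using solve_c2[OF c2 kanz] ka by (simp_all add: mu_def)
    have neq2: "hypB ga \<noteq> hypB ep'" using Y(4) X2 Yb unfolding tangent_def by auto
    obtain r where r: "r \<in> Y" "r \<in> X2" and ru: "\<And>q. q \<in> Y \<Longrightarrow> q \<in> X2 \<Longrightarrow> q = r"
      using Y(4) unfolding tangent_def by auto
    obtain rw where rw: "r = proj_pt rw" "rw \<noteq> 0" "rw \<in> hypB ep'" "Qf rw = 0"
      using r(1) Yb by (auto elim: ovl_elem)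
    have rwg: "rw \<in> hypB ga" using r(2) X2 ovm[OF rw(2)] rw(1) by simp
    have uniq2: "\<exists>k. w = smul5 k rw" if "w \<noteq> 0" "w \<in> hypB ga" "w \<in> hypB ep'" "Qf w = 0" for w
    proof -
      have "proj_pt w \<in> Y" "proj_pt w \<in> X2" using that X2 Yb ovm by auto
      hence "proj_pt w = proj_pt rw" using ru rw(1) by simp
      thus ?thesis using proj_eq by blast
    qed
    obtain rh where rh: "rw$1 = rh * (ga$1 + ep'$1)" "rw$2 = rh * (ga$2 + ep'$2)"
      "rw$3 = rh * (ga$3 + ep'$3)" "rw$4 = rh * (ga$4 + ep'$4)"
      using lemT[OF c2 neq2 rw(2) rwg rw(3) rw(4) uniq2] by blast
    have rhnz: "rh \<noteq> 0" using coords_nz[OF rwg rw(2)] rh by auto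
    define wm where "wm = be + ga + smul5 mu xv"
    have rwm: "rw$1 = rh * wm$1" "rw$2 = rh * wm$2" "rw$3 = rh * wm$3" "rw$4 = rh * wm$4"
      using rh ep'c by (simp_all add: wm_def algebra_simps)
    have sc: "Bp ga rw = rh * Bp ga wm" "phi rw = rh^2 * phi wm"
      using scale14[OF rwm] by simp_all
    have "0 = (Bp ga rw)^2 + phi rw" using rw(4) rwg by (simp add: Qf_exp hypB_def)
    also have "\<dots> = rh^2 * ((Bp ga wm)^2 + phi wm)"
      using sc by (simp add: power_mult_distrib algebra_simps)
    finally have "(Bp ga wm)^2 + phi wm = 0" using rhnz by simp
    hence "(mu * s)^2 + mu * s = 0" unfolding wm_def s_def using QW[OF c2 Qd Xf, of mu] by simp
    hence "(mu * s) * (mu * s + 1) = 0" by (simp add: power2_eq_square algebra_simps)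
    moreover have "mu * s \<noteq> 0" using kanz snz by (simp add: mu_def)
    ultimately have "mu * s + 1 = 0" by simp
    hence "mu * s = 1" using c2 by (simp add: c2_eq)
    hence mus: "mu = 1 / s" using snz by (simp add: field_simps)
    have "hypB ep' = hypB ep"
      by (rule hypB_eq) (simp_all add: ep'c ep_def mus)
    thus ?thesis using Yb X_def by simp
  qed
  show ?thesis
    by (rule ex1I[of _ X]) (use eX xX t1 t2 uq in blast)+
qed

end
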